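(* Let $j\in\{2,3,4,5,6\}$, $\mathbf c\in\mathbf C^j_{\rm aut}$, $\mathbf m\in\mathbf M_{\mathbf c}$, $n>0$, $\bar s=(s_1,\dots,s_n)\in\mathbb Z^n$, $\bar b=(b_1,\dots,b_n)\in(L_{\mathbf c})^n$ and $\pi\in\operatorname{End}(N_{\mathbf c})$. Put $F^{\bar s,\bar b}_{\mathbf m}:=\sum_{i=1}^ns_i\,(F^{b_i}_{\mathbf m}\restriction\mathcal Z(H_{\mathbf m}))\in\operatorname{End}(\mathcal Z(H_{\mathbf m}))$ and $h'^*:=h^*_{\mathbf c}\circ\pi:N_{\mathbf c}\to H_{\mathbf c}$. Let $\mathcal A^{\bar s,\bar b}_{\mathbf m,\pi}$ be the set of all $g\in\operatorname{End}(H_{\mathbf m})$ with $g\restriction\mathcal Z(H_{\mathbf m})=F^{\bar s,\bar b}_{\mathbf m}$ and $g(x)\in h'^*(h_{\mathbf m}(x))\cdot\mathcal Z(H_{\mathbf m})$ for all $x\in H_{\mathbf m}$. Let $\mathcal F^{\bar s,\bar b}_{\mathbf m,\pi}$ be the set of all functions $f:N_{\mathbf c}\to\mathcal Z(H_{\mathbf m})$ such that for all $a,b\in N_{\mathbf c}$, $f(a)f(b)=F^{\bar s,\bar b}_{\mathbf m}(t')\cdot(t'')^{-1}\cdot f(ab)$, where $t',t''\in\mathcal Z(H_{\mathbf c})$ are the unique elements with $t'h^*_{\mathbf c}(ab)=h^*_{\mathbf c}(a)h^*_{\mathbf c}(b)$ and $t''h'^*(ab)=h'^*(a)h'^*(b)$.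 For $f\in\mathcal F^{\bar s,\bar b}_{\mathbf m,\pi}$ let $g^{\bar s,\bar b}_{\pi,f}:H_{\mathbf m}\to H_{\mathbf m}$ be $g^{\bar s,\bar b}_{\pi,f}(x)=F^{\bar s,\bar b}_{\mathbf m}(t)\cdot f(h_{\mathbf m}(x))\cdot h'^*(h_{\mathbf m}(x))$, where $t\in\mathcal Z(H_{\mathbf m})$ is the unique element with $x=t\,h^*_{\mathbf c}(h_{\mathbf m}(x))$. Then $\mathcal A^{\bar s,\bar b}_{\mathbf m,\pi}=\{g^{\bar s,\bar b}_{\pi,f}: f\in\mathcal F^{\bar s,\bar b}_{\mathbf m,\pi}\}$.
   Context: Groups are not assumed abelian; $\mathcal Z(H)$ is the center of $H$; the group operation in $\mathcal Z(H)$ is written multiplicatively in the formulas above, while sums of endomorphisms of $\mathcal Z(H)$ are pointwise (so $\sum_is_i\phi_i$ sends $z$ to $\prod_i\phi_i(z)^{s_i}$). $J_p$ is the additive group of $p$-adic integers. $\mathbf C^2_{\rm aut}$: tuples $\mathbf c=(L_{\mathbf c},N_{\mathbf c},H_{\mathbf c},h_{\mathbf c},h^*_{\mathbf c},F_{\mathbf c},(Q^{\bar s}_{\mathbf c}))$ with $L_{\mathbf c},H_{\mathbf c}$ groups, $F_{\mathbf c}:L_{\mathbf c}\to\operatorname{Aut}(H_{\mathbf c})$ an injective homomorphism ($F^\ell_{\mathbf c}:=F_{\mathbf c}(\ell)$), $N_{\mathbf c}\trianglelefteq L_{\mathbf c}$, $h_{\mathbf c}:H_{\mathbf c}\to N_{\mathbf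 c}$ an epimorphism with kernel $\mathcal Z(H_{\mathbf c})$ such that $F_{\mathbf c}(h_{\mathbf c}(a))$ is $x\mapsto axa^{-1}$ for all $a\in H_{\mathbf c}$, $h^*_{\mathbf c}:N_{\mathbf c}\to H_{\mathbf c}$ a map (not necessarily a homomorphism) with $h_{\mathbf c}\circ h^*_{\mathbf c}=\mathrm{id}$, and $(b_1,\dots,b_n)\in Q^{\bar s}_{\mathbf c}$ iff $\sum_is_iF^{b_i}_{\mathbf c}\restriction\mathcal Z(H_{\mathbf c})=0$. $\mathbf C^3_{\rm aut}$: add $H^*_{\mathbf c},\mathbb P_{\mathbf c}$ with $\mathcal Z(H_{\mathbf c})$ reduced; $H^*_{\mathbf c}\le H_{\mathbf c}$, $H_{\mathbf c}=\bigcup_{x\in\mathcal Z(H_{\mathbf c})}H^*_{\mathbf c}x$, $\mathcal Z(H^*_{\mathbf c})=\mathcal Z(H_{\mathbf c})\cap H^*_{\mathbf c}$; $\mathbb P_{\mathbf c}$ = set of primes $p$ such that $\mathcal Z(H_{\mathbf c})$ has a nonzero element of $p$-power order (then so does $\mathcal Z(H^*_{\mathbf c})$) or $J_p$ embeds in $\mathcal Z(H_{\mathbf c})$ (then $J_p$ embeds in $\mathcal Z(H^*_{\mathbf c})$). $\mathbf C^4_{\rm aut}$: $\mathbf c\in\mathbf C^3_{\rm aut}$ with $\mathcal Z(H_{\mathbf c})/\mathcal Z(H^*_{\mathbf c})$ torsion-free and $p$-divisible for all primes $p\notin\mathbb P_{\mathbf c}$. $\mathbf C^5_{\rm aut}$: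 pairs $(\mathbf c,\mathbf g)$, $\mathbf c\in\mathbf C^4_{\rm aut}$, $\mathbf g=(\mathbb G_{\mathbf g},(F^\ell_{\mathbf g})_{\ell\in L_{\mathbf c}})$, $\mathbb G_{\mathbf g}$ reduced torsion-free abelian with no $J_p$ embedded, $F^\ell_{\mathbf g}\in\operatorname{Aut}(\mathbb G_{\mathbf g})$, $(b_i)\in Q^{\bar s}_{\mathbf c}\Rightarrow\sum s_iF^{b_i}_{\mathbf g}=0$. $\mathbf C^6_{\rm aut}$: pairs $(\mathbf c,\mathcal G)$, $\mathbf c\in\mathbf C^4_{\rm aut}$, $\mathcal G$ a nonempty set of $\mathbf g$ with $(\mathbf c,\mathbf g)\in\mathbf C^5_{\rm aut}$, closed under restriction to $\mathrm{cl}\{x\}$ (smallest pure subgroup of $\mathbb G_{\mathbf g}$ containing $x$ closed under all $F^\ell_{\mathbf g}$), and containing up to isomorphism every such one-generated $\mathbf g$ embeddable compatibly into $(\mathcal Z(H_{\mathbf c}),(F^\ell_{\mathbf c})_\ell)$. For $j\in\{5,6\}$ the members are pairs and $L_{\mathbf c},H_{\mathbf c},\dots$ denote components of the underlying tuple. $\mathbf M_{\mathbf c}$: the class of $\mathbf m\in\mathbf C^j_{\rm aut}$ with $L_{\mathbf m}=L_{\mathbf c}$, $N_{\mathbf m}=N_{\mathbf c}$, $H_{\mathbf c}\subseteq H_{\mathbf m}$, $h_{\mathbf c}\subseteq h_{\mathbf m}$, $h^*_{\mathbf m}=h^*_{\mathbf c}$, $F^\ell_{\mathbf c}\subseteq F^\ell_{\mathbf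 m}$ for all $\ell$, $Q^{\bar s}_{\mathbf m}=Q^{\bar s}_{\mathbf c}$, $H_{\mathbf m}$ generated by $\mathcal Z(H_{\mathbf m})\cup H_{\mathbf c}$, $\mathcal Z(H_{\mathbf c})=\mathcal Z(H_{\mathbf m})\cap H_{\mathbf c}$; if $j\ge3$ also $\mathbb P_{\mathbf m}=\mathbb P_{\mathbf c}$, $H^*_{\mathbf m}=H^*_{\mathbf c}$; if $j=5$ the same $\mathbf g$; if $j=6$ the same $\mathcal G$. *)

theory Defs
  imports "HOL-Algebra.Algebra"
begin

definition grp_center :: "('h, 'b) monoid_scheme \<Rightarrow> 'h set" where
  "grp_center H = {z \<in> carrier H. \<forall>x \<in> carrier H. z \<otimes>\<^bsub>H\<^esub> x = x \<otimes>\<^bsub>H\<^esub> z}"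

(* The pointwise combination  sum_i s_i F^{b_i}  evaluated at z, i.e.
   prod_i F^{b_i}(z)^{s_i}  (computed in H; used only on the abelian group Z(H)). *)
definition lin_comb ::
  "('h, 'b) monoid_scheme \<Rightarrow> int list \<Rightarrow> 'l list \<Rightarrow> ('l \<Rightarrow> 'h \<Rightarrow> 'h) \<Rightarrow> 'h \<Rightarrow> 'h" where
  "lin_comb H ss bs F z =
     foldr (\<lambda>(s, b) acc. (F b z [^]\<^bsub>H\<^esub> s) \<otimes>\<^bsub>H\<^esub> acc) (zip ss bs) \<one>\<^bsub>H\<^esub>"

definition Qrel ::
  "('h, 'b) monoid_scheme \<Rightarrow> ('l \<Rightarrow> 'h \<Rightarrow> 'h) \<Rightarrow> int list \<Rightarrow> 'l list \<Rightarrow> bool" where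
  "Qrel H F ss bs \<longleftrightarrow> (\<forall>z \<in> grp_center H. lin_comb H ss bs F z = \<one>\<^bsub>H\<^esub>)"

(* Membership in C^2_aut of the tuple (L, N, H, h, h*, F, (Q^s)); the component Q^s is
   determined by F (Qrel), so it is not a separate parameter. *)
definition C2_aut ::
  "('l, 'a) monoid_scheme \<Rightarrow> 'l set \<Rightarrow> ('h, 'b) monoid_scheme \<Rightarrow> ('h \<Rightarrow> 'l) \<Rightarrow> ('l \<Rightarrow> 'h)
     \<Rightarrow> ('l \<Rightarrow> 'h \<Rightarrow> 'h) \<Rightarrow> bool" where
  "C2_aut L N H h hs F \<longleftrightarrow>
     group L \<and> group H \<and> N \<lhd> L \<and>
     (\<forall>l \<in> carrier L. F l \<in> iso H H) \<and>
     (\<forall>l1 \<in> carrier L. \<forall>l2 \<in> carrier L. \<forall>x \<in> carrier H.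
         F (l1 \<otimes>\<^bsub>L\<^esub> l2) x = F l1 (F l2 x)) \<and>
     (\<forall>l1 \<in> carrier L. \<forall>l2 \<in> carrier L. (\<forall>x \<in> carrier H. F l1 x = F l2 x) \<longrightarrow> l1 = l2) \<and>
     h \<in> epi H (L\<lparr>carrier := N\<rparr>) \<and>
     kernel H (L\<lparr>carrier := N\<rparr>) h = grp_center H \<and>
     (\<forall>a \<in> carrier H. \<forall>x \<in> carrier H. F (h a) x = a \<otimes>\<^bsub>H\<^esub> x \<otimes>\<^bsub>H\<^esub> inv\<^bsub>H\<^esub> a) \<and>
     (\<forall>n \<in> N. hs n \<in> carrier H \<and> h (hs n) = n)"

(* m = (L, N, Hm, hm, hs, Fm, Q_m) belongs to M_c for c = (L, N, Hm|C, hc, hs, Fc, Q_c), j = 2 *)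
definition M_member_2 ::
  "('l, 'a) monoid_scheme \<Rightarrow> 'l set \<Rightarrow> ('h, 'b) monoid_scheme \<Rightarrow> 'h set \<Rightarrow> ('h \<Rightarrow> 'l)
     \<Rightarrow> ('h \<Rightarrow> 'l) \<Rightarrow> ('l \<Rightarrow> 'h) \<Rightarrow> ('l \<Rightarrow> 'h \<Rightarrow> 'h) \<Rightarrow> ('l \<Rightarrow> 'h \<Rightarrow> 'h) \<Rightarrow> bool" where
  "M_member_2 L N Hm C hc hm hs Fc Fm \<longleftrightarrow>
     C2_aut L N Hm hm hs Fm \<and>
     subgroup C Hm \<and>
     (\<forall>x \<in> C. hm x = hc x) \<and>
     (\<forall>l \<in> carrier L. \<forall>x \<in> C. Fm l x = Fc l x) \<and>
     (\<forall>ss bs. length ss = length bs \<longrightarrow> set bs \<subseteq> carrier L \<longrightarrow>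
         (Qrel Hm Fm ss bs \<longleftrightarrow> Qrel (Hm\<lparr>carrier := C\<rparr>) Fc ss bs)) \<and>
     carrier Hm = generate Hm (grp_center Hm \<union> C) \<and>
     grp_center (Hm\<lparr>carrier := C\<rparr>) = grp_center Hm \<inter> C"

definition A_set ::
  "('l, 'a) monoid_scheme \<Rightarrow> ('h, 'b) monoid_scheme \<Rightarrow> ('h \<Rightarrow> 'l) \<Rightarrow> ('l \<Rightarrow> 'h)
     \<Rightarrow> ('l \<Rightarrow> 'h \<Rightarrow> 'h) \<Rightarrow> int list \<Rightarrow> 'l list \<Rightarrow> ('l \<Rightarrow> 'l) \<Rightarrow> ('h \<Rightarrow> 'h) set" where
  "A_set L Hm hm hs Fm ss bs \<pi> =
     {g \<in> hom Hm Hm. g \<in> extensional (carrier Hm) \<and>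
        (\<forall>z \<in> grp_center Hm. g z = lin_comb Hm ss bs Fm z) \<and>
        (\<forall>x \<in> carrier Hm. g x \<in> hs (\<pi> (hm x)) <#\<^bsub>Hm\<^esub> grp_center Hm)}"

definition F_set ::
  "('l, 'a) monoid_scheme \<Rightarrow> 'l set \<Rightarrow> ('h, 'b) monoid_scheme \<Rightarrow> 'h set \<Rightarrow> ('l \<Rightarrow> 'h)
     \<Rightarrow> ('l \<Rightarrow> 'h \<Rightarrow> 'h) \<Rightarrow> int list \<Rightarrow> 'l list \<Rightarrow> ('l \<Rightarrow> 'l) \<Rightarrow> ('l \<Rightarrow> 'h) set" where
  "F_set L N Hm C hs Fm ss bs \<pi> =
     {f \<in> N \<rightarrow>\<^sub>E grp_center Hm.
        \<forall>a \<in> N. \<forall>b \<in> N.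
          f a \<otimes>\<^bsub>Hm\<^esub> f b =
            lin_comb Hm ss bs Fm
               (THE t'. t' \<in> grp_center (Hm\<lparr>carrier := C\<rparr>) \<and>
                   t' \<otimes>\<^bsub>Hm\<^esub> hs (a \<otimes>\<^bsub>L\<^esub> b) = hs a \<otimes>\<^bsub>Hm\<^esub> hs b)
            \<otimes>\<^bsub>Hm\<^esub> inv\<^bsub>Hm\<^esub>
               (THE t''. t'' \<in> grp_center (Hm\<lparr>carrier := C\<rparr>) \<and>
                   t'' \<otimes>\<^bsub>Hm\<^esub> hs (\<pi> (a \<otimes>\<^bsub>L\<^esub> b)) = hs (\<pi> a) \<otimes>\<^bsub>Hm\<^esub> hs (\<pi> b))
            \<otimes>\<^bsub>Hm\<^esub> f (a \<otimes>\<^bsub>L\<^esub> b)}"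

definition g_fun ::
  "('h, 'b) monoid_scheme \<Rightarrow> ('h \<Rightarrow> 'l) \<Rightarrow> ('l \<Rightarrow> 'h) \<Rightarrow> ('l \<Rightarrow> 'h \<Rightarrow> 'h) \<Rightarrow> int list
     \<Rightarrow> 'l list \<Rightarrow> ('l \<Rightarrow> 'l) \<Rightarrow> ('l \<Rightarrow> 'h) \<Rightarrow> 'h \<Rightarrow> 'h" where
  "g_fun Hm hm hs Fm ss bs \<pi> f =
     (\<lambda>x \<in> carrier Hm.
        lin_comb Hm ss bs Fm (THE t. t \<in> grp_center Hm \<and> x = t \<otimes>\<^bsub>Hm\<^esub> hs (hm x))
        \<otimes>\<^bsub>Hm\<^esub> f (hm x) \<otimes>\<^bsub>Hm\<^esub> hs (\<pi> (hm x)))"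

end

theory Submission
  imports Defs
begin

locale P35 =
  fixes L :: "('l, 'a) monoid_scheme" and N :: "'l set"
    and Hm :: "('h, 'b) monoid_scheme" and C :: "'h set"
    and hm :: "'h \<Rightarrow> 'l" and hs :: "'l \<Rightarrow> 'h"
    and Fm :: "'l \<Rightarrow> 'h \<Rightarrow> 'h"
    and ss :: "int list" and bs :: "'l list" and \<pi> :: "'l \<Rightarrow> 'l"
  assumes grpH: "group Hm" and grpK: "group (L\<lparr>carrier := N\<rparr>)"
    and subC: "subgroup C Hm"
    and hmhom: "hm \<in> hom Hm (L\<lparr>carrier := N\<rparr>)"
    and ker: "kernel Hm (L\<lparr>carrier := N\<rparr>) hm = grp_center Hm"
    and hsN: "\<And>a. a \<in> N \<Longrightarrow> hs a \<in> C \<and> hm (hs a) = a"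
    and ZC: "grp_center (Hm\<lparr>carrier := C\<rparr>) = grp_center Hm \<inter> C"
    and Fiso: "\<And>b. b \<in> set bs \<Longrightarrow> Fm b \<in> iso Hm Hm"
    and pihom: "\<pi> \<in> hom (L\<lparr>carrier := N\<rparr>) (L\<lparr>carrier := N\<rparr>)"
begin

abbreviation "Z \<equiv> grp_center Hm"
abbreviation "K \<equiv> L\<lparr>carrier := N\<rparr>"

lemma ghom: "group_hom Hm K hm"
  using grpH grpK hmhom by (simp add: group_hom_def group_hom_axioms_def)

lemma Zsub: "subgroup Z Hm"
  using group_hom.subgroup_kernel[OF ghom] ker by simp

lemma Zcar: "z \<in> Z \<Longrightarrow> z \<in> carrier Hm"
  by (rule subgroup.mem_carrier[OF Zsub])

lemma Zcomm: "z \<in> Z \<Longrightarrow> x \<in> carrier Hm \<Longrightarrow> z \<otimes>\<^bsub>Hm\<^esub> x = x \<otimes>\<^bsub>Hm\<^esub> z"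
  unfolding grp_center_def by (drule CollectD) (erule conjE, erule bspec)

lemma Zmult: "z \<in> Z \<Longrightarrow> w \<in> Z \<Longrightarrow> z \<otimes>\<^bsub>Hm\<^esub> w \<in> Z"
  by (rule subgroup.m_closed[OF Zsub])

lemma Zinv: "z \<in> Z \<Longrightarrow> inv\<^bsub>Hm\<^esub> z \<in> Z"
  by (rule subgroup.m_inv_closed[OF Zsub])

lemma Zone: "\<one>\<^bsub>Hm\<^esub> \<in> Z"
  by (rule subgroup.one_closed[OF Zsub])

lemma Zpow: "z \<in> Z \<Longrightarrow> z [^]\<^bsub>Hm\<^esub> (k::int) \<in> Z"
  using Zsub group.subgroup_int_pow_closed[OF grpH] by blast

lemma ker_iff: "x \<in> carrier Hm \<Longrightarrow> (x \<in> Z) = (hm x = \<one>\<^bsub>L\<^esub>)"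
  using ker by (auto simp: kernel_def)

lemma hm_car: "x \<in> carrier Hm \<Longrightarrow> hm x \<in> N"
  using hmhom by (auto simp: hom_def)

lemma Ccar: "x \<in> C \<Longrightarrow> x \<in> carrier Hm"
  using subC subgroup.subset by blast

lemma iso_Z: assumes f: "f \<in> iso Hm Hm" and z: "z \<in> Z" shows "f z \<in> Z"
proof -
  have fh: "f \<in> hom Hm Hm" and su: "f ` carrier Hm = carrier Hm" using f by (auto simp: iso_iff)
  have zc: "z \<in> carrier Hm" using z Zcar by blast
  have "f z \<in> carrier Hm" using fh zc by (auto simp: hom_def)
  moreover have "\<forall>x \<in> carrier Hm. f z \<otimes>\<^bsub>Hm\<^esub> x = x \<otimes>\<^bsub>Hm\<^esub> f z"
  proof
    fix x assume "x \<in> carrier Hm"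
    then obtain y where y: "y \<in> carrier Hm" "x = f y" using su by blast
    have "f z \<otimes>\<^bsub>Hm\<^esub> f y = f (z \<otimes>\<^bsub>Hm\<^esub> y)" using fh zc y by (simp add: hom_mult)
    also have "\<dots> = f (y \<otimes>\<^bsub>Hm\<^esub> z)" using Zcomm[OF z y(1)] by simp
    also have "\<dots> = f y \<otimes>\<^bsub>Hm\<^esub> f z" using fh zc y by (simp add: hom_mult)
    finally show "f z \<otimes>\<^bsub>Hm\<^esub> x = x \<otimes>\<^bsub>Hm\<^esub> f z" using y by simp
  qed
  ultimately show ?thesis by (simp add: grp_center_def)
qed

lemma Zswap: "z1 \<in> Z \<Longrightarrow> z2 \<in> Z \<Longrightarrow> p \<in> carrier Hm \<Longrightarrow> q \<in> carrier Hm \<Longrightarrow>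
   (z1 \<otimes>\<^bsub>Hm\<^esub> p) \<otimes>\<^bsub>Hm\<^esub> (z2 \<otimes>\<^bsub>Hm\<^esub> q) = (z1 \<otimes>\<^bsub>Hm\<^esub> z2) \<otimes>\<^bsub>Hm\<^esub> (p \<otimes>\<^bsub>Hm\<^esub> q)"
proof -
  assume a: "z1 \<in> Z" "z2 \<in> Z" "p \<in> carrier Hm" "q \<in> carrier Hm"
  interpret H: group Hm by (rule grpH)
  have c: "z1 \<in> carrier Hm" "z2 \<in> carrier Hm" using a Zcar by auto
  have "(z1 \<otimes>\<^bsub>Hm\<^esub> p) \<otimes>\<^bsub>Hm\<^esub> (z2 \<otimes>\<^bsub>Hm\<^esub> q) = z1 \<otimes>\<^bsub>Hm\<^esub> ((p \<otimes>\<^bsub>Hm\<^esub> z2) \<otimes>\<^bsub>Hm\<^esub> q)"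
    using a c by (simp add: H.m_assoc)
  also have "\<dots> = z1 \<otimes>\<^bsub>Hm\<^esub> ((z2 \<otimes>\<^bsub>Hm\<^esub> p) \<otimes>\<^bsub>Hm\<^esub> q)" using Zcomm[OF a(2) a(3)] by simp
  finally show ?thesis using a c by (simp add: H.m_assoc)
qed

lemma lc_gen:
  fixes ps :: "(int \<times> 'l) list"
  assumes "\<forall>p \<in> set ps. Fm (snd p) \<in> iso Hm Hm"
  shows "(\<forall>z \<in> Z. foldr (\<lambda>(s, b) acc. (Fm b z [^]\<^bsub>Hm\<^esub> s) \<otimes>\<^bsub>Hm\<^esub> acc) ps \<one>\<^bsub>Hm\<^esub> \<in> Z) \<and>
    (\<forall>z1 \<in> Z. \<forall>z2 \<in> Z. foldr (\<lambda>(s, b) acc. (Fm b (z1 \<otimes>\<^bsub>Hm\<^esub> z2) [^]\<^bsub>Hm\<^esub> s) \<otimes>\<^bsub>Hm\<^esub> acc) ps \<one>\<^bsub>Hm\<^esub>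
      = foldr (\<lambda>(s, b) acc. (Fm b z1 [^]\<^bsub>Hm\<^esub> s) \<otimes>\<^bsub>Hm\<^esub> acc) ps \<one>\<^bsub>Hm\<^esub> \<otimes>\<^bsub>Hm\<^esub>
        foldr (\<lambda>(s, b) acc. (Fm b z2 [^]\<^bsub>Hm\<^esub> s) \<otimes>\<^bsub>Hm\<^esub> acc) ps \<one>\<^bsub>Hm\<^esub>)"
  using assms
proof (induction ps)
  case Nil
  interpret H: group Hm by (rule grpH)
  show ?case using Zone by simp
next
  case (Cons p ps)
  interpret H: group Hm by (rule grpH)
  obtain s b where p: "p = (s, b)" by (cases p)
  have Fb: "Fm b \<in> iso Hm Hm" using Cons.prems p by auto
  have IH: "\<forall>z \<in> Z. foldr (\<lambda>(s, b) acc. (Fm b z [^]\<^bsub>Hm\<^esub> s) \<otimes>\<^bsub>Hm\<^esub> acc) ps \<one>\<^bsub>Hm\<^esub> \<in> Z"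
    "\<forall>z1 \<in> Z. \<forall>z2 \<in> Z. foldr (\<lambda>(s, b) acc. (Fm b (z1 \<otimes>\<^bsub>Hm\<^esub> z2) [^]\<^bsub>Hm\<^esub> s) \<otimes>\<^bsub>Hm\<^esub> acc) ps \<one>\<^bsub>Hm\<^esub>
      = foldr (\<lambda>(s, b) acc. (Fm b z1 [^]\<^bsub>Hm\<^esub> s) \<otimes>\<^bsub>Hm\<^esub> acc) ps \<one>\<^bsub>Hm\<^esub> \<otimes>\<^bsub>Hm\<^esub>
        foldr (\<lambda>(s, b) acc. (Fm b z2 [^]\<^bsub>Hm\<^esub> s) \<otimes>\<^bsub>Hm\<^esub> acc) ps \<one>\<^bsub>Hm\<^esub>"
    using Cons.IH Cons.prems by simp_all
  have FZ: "\<And>z. z \<in> Z \<Longrightarrow> Fm b z [^]\<^bsub>Hm\<^esub> s \<in> Z" by (rule Zpow, rule iso_Z[OF Fb])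
  show ?case
  proof (intro conjI ballI)
    fix z assume "z \<in> Z"
    then show "foldr (\<lambda>(s, b) acc. (Fm b z [^]\<^bsub>Hm\<^esub> s) \<otimes>\<^bsub>Hm\<^esub> acc) (p # ps) \<one>\<^bsub>Hm\<^esub> \<in> Z"
      using IH(1) FZ p Zmult by simp
  next
    fix z1 z2 assume z: "z1 \<in> Z" "z2 \<in> Z"
    have zc: "z1 \<in> carrier Hm" "z2 \<in> carrier Hm" using z Zcar by auto
    have f1: "Fm b z1 \<in> Z" "Fm b z2 \<in> Z" using iso_Z[OF Fb] z by auto
    have "Fm b (z1 \<otimes>\<^bsub>Hm\<^esub> z2) = Fm b z1 \<otimes>\<^bsub>Hm\<^esub> Fm b z2"
      using Fb zc by (simp add: iso_iff hom_mult)
    moreover have "Fm b z1  \<otimes>\<^bsub>Hm\<^esub>  Fm b z2 = Fm b z2  \<otimes>\<^bsub>Hm\<^esub>  Fm b z1" using Zcomm[OF f1(1) Zcar[OF f1(2)]] .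
    ultimately have pw: "Fm b (z1  \<otimes>\<^bsub>Hm\<^esub>  z2) [^]\<^bsub>Hm\<^esub> s = Fm b z1 [^]\<^bsub>Hm\<^esub> s  \<otimes>\<^bsub>Hm\<^esub>  Fm b z2 [^]\<^bsub>Hm\<^esub> s"
      using H.int_pow_mult_distrib[of "Fm b z1" "Fm b z2" s] Zcar[OF f1(1)] Zcar[OF f1(2)] by simp
    define R1 where "R1 = foldr (\<lambda>(s, b) acc. (Fm b z1 [^]\<^bsub>Hm\<^esub> s)  \<otimes>\<^bsub>Hm\<^esub>  acc) ps \<one>\<^bsub>Hm\<^esub>"
    define R2 where "R2 = foldr (\<lambda>(s, b) acc. (Fm b z2 [^]\<^bsub>Hm\<^esub> s)  \<otimes>\<^bsub>Hm\<^esub>  acc) ps \<one>\<^bsub>Hm\<^esub>"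
    have R: "R1 \<in> Z" "R2 \<in> Z" using IH(1) z R1_def R2_def by auto
    have e: "(Fm b z1 [^]\<^bsub>Hm\<^esub> s  \<otimes>\<^bsub>Hm\<^esub>  R1)  \<otimes>\<^bsub>Hm\<^esub>  (Fm b z2 [^]\<^bsub>Hm\<^esub> s  \<otimes>\<^bsub>Hm\<^esub>  R2) = (Fm b z1 [^]\<^bsub>Hm\<^esub> s  \<otimes>\<^bsub>Hm\<^esub>  Fm b z2 [^]\<^bsub>Hm\<^esub> s)  \<otimes>\<^bsub>Hm\<^esub>  (R1  \<otimes>\<^bsub>Hm\<^esub>  R2)"
      using Zswap[OF FZ[OF z(1)] FZ[OF z(2)] Zcar[OF R(1)] Zcar[OF R(2)]] .
    have IH2: "foldr (\<lambda>(s, b) acc. (Fm b (z1  \<otimes>\<^bsub>Hm\<^esub>  z2) [^]\<^bsub>Hm\<^esub> s)  \<otimes>\<^bsub>Hm\<^esub>  acc) ps \<one>\<^bsub>Hm\<^esub> = R1  \<otimes>\<^bsub>Hm\<^esub>  R2"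
      using IH(2) z R1_def R2_def by simp
    then show "foldr (\<lambda>(s, b) acc. (Fm b (z1 \<otimes>\<^bsub>Hm\<^esub> z2) [^]\<^bsub>Hm\<^esub> s) \<otimes>\<^bsub>Hm\<^esub> acc) (p # ps) \<one>\<^bsub>Hm\<^esub>
      = foldr (\<lambda>(s, b) acc. (Fm b z1 [^]\<^bsub>Hm\<^esub> s) \<otimes>\<^bsub>Hm\<^esub> acc) (p # ps) \<one>\<^bsub>Hm\<^esub> \<otimes>\<^bsub>Hm\<^esub>
        foldr (\<lambda>(s, b) acc. (Fm b z2 [^]\<^bsub>Hm\<^esub> s) \<otimes>\<^bsub>Hm\<^esub> acc) (p # ps) \<one>\<^bsub>Hm\<^esub>"
      unfolding p using pw IH2 e R1_def R2_def by simp
  qed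
qed

abbreviation "lam \<equiv> lin_comb Hm ss bs Fm"

lemma lamZ: "z \<in> Z \<Longrightarrow> lam z \<in> Z"
  and lam_mult: "z1 \<in> Z \<Longrightarrow> z2 \<in> Z \<Longrightarrow> lam (z1 \<otimes>\<^bsub>Hm\<^esub> z2) = lam z1 \<otimes>\<^bsub>Hm\<^esub> lam z2"
proof -
  have "\<forall>p \<in> set (zip ss bs). Fm (snd p) \<in> iso Hm Hm"
    using Fiso set_zip_rightD by fastforce
  note l = lc_gen[OF this]
  show "z \<in> Z \<Longrightarrow> lam z \<in> Z" using l unfolding lin_comb_def by blast
  show "z1 \<in> Z \<Longrightarrow> z2 \<in> Z \<Longrightarrow> lam (z1 \<otimes>\<^bsub>Hm\<^esub> z2) = lam z1 \<otimes>\<^bsub>Hm\<^esub> lam z2"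
    using l unfolding lin_comb_def by blast
qed


lemma Hgrp: "group Hm" by (rule grpH)

lemma the_Z: assumes "t \<in> Z" "x = t  \<otimes>\<^bsub>Hm\<^esub>  y" "y \<in> carrier Hm"
  shows "(THE t. t \<in> Z \<and> x = t  \<otimes>\<^bsub>Hm\<^esub>  y) = t"
proof (rule the_equality)
  show "t \<in> Z \<and> x = t  \<otimes>\<^bsub>Hm\<^esub>  y" using assms by simp
next
  fix t2 assume "t2 \<in> Z \<and> x = t2  \<otimes>\<^bsub>Hm\<^esub>  y"
  then show "t2 = t" using assms group.right_cancel[OF grpH] Zcar by metis
qed

lemma hm_mult: "x \<in> carrier Hm \<Longrightarrow> y \<in> carrier Hm \<Longrightarrow> hm (x  \<otimes>\<^bsub>Hm\<^esub>  y) = hm x \<otimes>\<^bsub>L\<^esub> hm y"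
  using hmhom by (simp add: hom_mult[OF hmhom])

lemma hm_invdiff: assumes "x \<in> carrier Hm" "y \<in> carrier Hm" "hm x = hm y"
  shows "x  \<otimes>\<^bsub>Hm\<^esub>  inv\<^bsub>Hm\<^esub> y \<in> Z"
proof -
  interpret H: group Hm by (rule grpH)
  interpret K: group K by (rule grpK)
  have "hm (x  \<otimes>\<^bsub>Hm\<^esub>  inv\<^bsub>Hm\<^esub> y) = hm x \<otimes>\<^bsub>K\<^esub> inv\<^bsub>K\<^esub> hm y"
    using group_hom.hom_inv[OF ghom] assms hom_mult[OF hmhom] by simp
  also have "\<dots> = \<one>\<^bsub>K\<^esub>" using assms hm_car K.r_inv by simp
  finally show ?thesis using ker_iff assms by simp
qed

lemma T_prop: assumes x: "x \<in> carrier Hm"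
  shows "(THE t. t \<in> Z \<and> x = t  \<otimes>\<^bsub>Hm\<^esub>  hs (hm x)) \<in> Z \<and> x = (THE t. t \<in> Z \<and> x = t  \<otimes>\<^bsub>Hm\<^esub>  hs (hm x))  \<otimes>\<^bsub>Hm\<^esub>  hs (hm x)"
proof -
  interpret H: group Hm by (rule grpH)
  have a: "hm x \<in> N" using hm_car x by simp
  have y: "hs (hm x) \<in> carrier Hm" "hm (hs (hm x)) = hm x" using hsN[OF a] Ccar by auto
  define t where "t = x  \<otimes>\<^bsub>Hm\<^esub>  inv\<^bsub>Hm\<^esub> hs (hm x)"
  have tZ: "t \<in> Z" unfolding t_def using hm_invdiff x y by simp
  have xe: "x = t  \<otimes>\<^bsub>Hm\<^esub>  hs (hm x)" unfolding t_def using x y by (simp add: H.m_assoc)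
  show ?thesis using the_Z[OF tZ xe y(1)] tZ xe by simp
qed

lemma Tgen: assumes "u \<in> C" "v \<in> C" "hm u = hm v"
  shows "(THE t. t \<in> grp_center (Hm\<lparr>carrier := C\<rparr>) \<and> t  \<otimes>\<^bsub>Hm\<^esub>  v = u) \<in> Z \<and>
         (THE t. t \<in> grp_center (Hm\<lparr>carrier := C\<rparr>) \<and> t  \<otimes>\<^bsub>Hm\<^esub>  v = u)  \<otimes>\<^bsub>Hm\<^esub>  v = u"
proof -
  interpret H: group Hm by (rule grpH)
  have c: "u \<in> carrier Hm" "v \<in> carrier Hm" using assms Ccar by auto
  define t where "t = u  \<otimes>\<^bsub>Hm\<^esub>  inv\<^bsub>Hm\<^esub> v"
  have tZ: "t \<in> Z" unfolding t_def using hm_invdiff c assms by simp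
  have tC: "t \<in> C" unfolding t_def using assms subC by (simp add: subgroup.m_closed subgroup.m_inv_closed)
  have te: "t  \<otimes>\<^bsub>Hm\<^esub>  v = u" unfolding t_def using c by (simp add: H.m_assoc)
  have "(THE t. t \<in> grp_center (Hm\<lparr>carrier := C\<rparr>) \<and> t  \<otimes>\<^bsub>Hm\<^esub>  v = u) = t"
  proof (rule the_equality)
    show "t \<in> grp_center (Hm\<lparr>carrier := C\<rparr>) \<and> t  \<otimes>\<^bsub>Hm\<^esub>  v = u" using ZC tZ tC te by simp
  next
    fix t2 assume "t2 \<in> grp_center (Hm\<lparr>carrier := C\<rparr>) \<and> t2  \<otimes>\<^bsub>Hm\<^esub>  v = u"
    then show "t2 = t" using te ZC Zcar tZ c H.right_cancel by (metis IntE)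
  qed
  then show ?thesis using tZ te by simp
qed

lemma KN: "a \<in> N \<Longrightarrow> b \<in> N \<Longrightarrow> a \<otimes>\<^bsub>L\<^esub> b \<in> N"
  using monoid.m_closed[OF group.is_monoid[OF grpK], of a b] by simp

lemma oneN: "\<one>\<^bsub>L\<^esub> \<in> N"
  using monoid.one_closed[OF group.is_monoid[OF grpK]] by simp

lemma one_one: "\<one>\<^bsub>L\<^esub> \<otimes>\<^bsub>L\<^esub> \<one>\<^bsub>L\<^esub> = \<one>\<^bsub>L\<^esub>"
  using monoid.l_one[OF group.is_monoid[OF grpK], of "\<one>\<^bsub>K\<^esub>"] monoid.one_closed[OF group.is_monoid[OF grpK]] by simp

lemma piN: "a \<in> N \<Longrightarrow> \<pi> a \<in> N"
  using pihom by (auto simp: hom_def)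

lemma pimult: "a \<in> N \<Longrightarrow> b \<in> N \<Longrightarrow> \<pi> (a \<otimes>\<^bsub>L\<^esub> b) = \<pi> a \<otimes>\<^bsub>L\<^esub> \<pi> b"
  using hom_mult[OF pihom, of a b] by simp

lemma pione: "\<pi> \<one>\<^bsub>L\<^esub> = \<one>\<^bsub>L\<^esub>"
  using hom_one[OF pihom grpK grpK] by simp

lemma t1_prop: assumes "a \<in> N" "b \<in> N"
  shows "(THE t'. t' \<in> grp_center (Hm\<lparr>carrier := C\<rparr>) \<and> t'  \<otimes>\<^bsub>Hm\<^esub>  hs (a \<otimes>\<^bsub>L\<^esub> b) = hs a  \<otimes>\<^bsub>Hm\<^esub>  hs b) \<in> Z \<and>
     (THE t'. t' \<in> grp_center (Hm\<lparr>carrier := C\<rparr>) \<and> t'  \<otimes>\<^bsub>Hm\<^esub>  hs (a \<otimes>\<^bsub>L\<^esub> b) = hs a  \<otimes>\<^bsub>Hm\<^esub>  hs b)  \<otimes>\<^bsub>Hm\<^esub>  hs (a \<otimes>\<^bsub>L\<^esub> b) = hs a  \<otimes>\<^bsub>Hm\<^esub>  hs b"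
proof (rule Tgen)
  show "hs a  \<otimes>\<^bsub>Hm\<^esub>  hs b \<in> C" using assms hsN subC by (simp add: subgroup.m_closed)
  show "hs (a \<otimes>\<^bsub>L\<^esub> b) \<in> C" using assms hsN KN by simp
  show "hm (hs a  \<otimes>\<^bsub>Hm\<^esub>  hs b) = hm (hs (a \<otimes>\<^bsub>L\<^esub> b))" using assms hsN KN hm_mult Ccar by simp
qed

lemma t2_prop: assumes "a \<in> N" "b \<in> N"
  shows "(THE t'. t' \<in> grp_center (Hm\<lparr>carrier := C\<rparr>) \<and> t'  \<otimes>\<^bsub>Hm\<^esub>  hs (\<pi> (a \<otimes>\<^bsub>L\<^esub> b)) = hs (\<pi> a)  \<otimes>\<^bsub>Hm\<^esub>  hs (\<pi> b)) \<in> Z \<and>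
     (THE t'. t' \<in> grp_center (Hm\<lparr>carrier := C\<rparr>) \<and> t'  \<otimes>\<^bsub>Hm\<^esub>  hs (\<pi> (a \<otimes>\<^bsub>L\<^esub> b)) = hs (\<pi> a)  \<otimes>\<^bsub>Hm\<^esub>  hs (\<pi> b))  \<otimes>\<^bsub>Hm\<^esub>  hs (\<pi> (a \<otimes>\<^bsub>L\<^esub> b)) = hs (\<pi> a)  \<otimes>\<^bsub>Hm\<^esub>  hs (\<pi> b)"
  using t1_prop[OF piN[OF assms(1)] piN[OF assms(2)]] pimult[OF assms] by simp


abbreviation "T1 a b \<equiv> (THE t'. t' \<in> grp_center (Hm\<lparr>carrier := C\<rparr>) \<and> t'  \<otimes>\<^bsub>Hm\<^esub>  hs (a \<otimes>\<^bsub>L\<^esub> b) = hs a  \<otimes>\<^bsub>Hm\<^esub>  hs b)"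
abbreviation "T2 a b \<equiv> (THE t'. t' \<in> grp_center (Hm\<lparr>carrier := C\<rparr>) \<and> t'  \<otimes>\<^bsub>Hm\<^esub>  hs (\<pi> (a \<otimes>\<^bsub>L\<^esub> b)) = hs (\<pi> a)  \<otimes>\<^bsub>Hm\<^esub>  hs (\<pi> b))"
abbreviation "TT x \<equiv> (THE t. t \<in> Z \<and> x = t  \<otimes>\<^bsub>Hm\<^esub>  hs (hm x))"

lemma hsc: "a \<in> N \<Longrightarrow> hs a \<in> carrier Hm"
  using hsN Ccar by blast

lemma F_to_A: assumes f: "f \<in> F_set L N Hm C hs Fm ss bs \<pi>"
  shows "g_fun Hm hm hs Fm ss bs \<pi> f \<in> A_set L Hm hm hs Fm ss bs \<pi>"
proof -
  interpret H: group Hm by (rule grpH)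
  let ?g = "g_fun Hm hm hs Fm ss bs \<pi> f"
  have fZ: "\<And>a. a \<in> N \<Longrightarrow> f a \<in> Z" using f by (auto simp: F_set_def)
  have cond: "\<And>a b. a \<in> N \<Longrightarrow> b \<in> N \<Longrightarrow> f a  \<otimes>\<^bsub>Hm\<^esub>  f b = lam (T1 a b)  \<otimes>\<^bsub>Hm\<^esub>  inv\<^bsub>Hm\<^esub> (T2 a b)  \<otimes>\<^bsub>Hm\<^esub>  f (a \<otimes>\<^bsub>L\<^esub> b)"
    using f by (auto simp: F_set_def)
  have cond2: "(f a  \<otimes>\<^bsub>Hm\<^esub>  f b)  \<otimes>\<^bsub>Hm\<^esub>  T2 a b = lam (T1 a b)  \<otimes>\<^bsub>Hm\<^esub>  f (a \<otimes>\<^bsub>L\<^esub> b)" if ab: "a \<in> N" "b \<in> N" for a b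
  proof -
    have z: "T1 a b \<in> Z" "T2 a b \<in> Z" using t1_prop[OF ab] t2_prop[OF ab] by auto
    have zc: "lam (T1 a b) \<in> carrier Hm" "T2 a b \<in> carrier Hm" "f (a \<otimes>\<^bsub>L\<^esub> b) \<in> carrier Hm"
      using z lamZ Zcar fZ KN ab by auto
    have "(f a  \<otimes>\<^bsub>Hm\<^esub>  f b)  \<otimes>\<^bsub>Hm\<^esub>  T2 a b = lam (T1 a b)  \<otimes>\<^bsub>Hm\<^esub>  (inv\<^bsub>Hm\<^esub> (T2 a b)  \<otimes>\<^bsub>Hm\<^esub>  (f (a \<otimes>\<^bsub>L\<^esub> b)  \<otimes>\<^bsub>Hm\<^esub>  T2 a b))"
      using cond[OF ab] zc by (simp add: H.m_assoc)
    also have "\<dots> = lam (T1 a b)  \<otimes>\<^bsub>Hm\<^esub>  (inv\<^bsub>Hm\<^esub> (T2 a b)  \<otimes>\<^bsub>Hm\<^esub>  (T2 a b  \<otimes>\<^bsub>Hm\<^esub>  f (a \<otimes>\<^bsub>L\<^esub> b)))"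
      using Zcomm[OF z(2) zc(3)] by simp
    also have "\<dots> = lam (T1 a b)  \<otimes>\<^bsub>Hm\<^esub>  f (a \<otimes>\<^bsub>L\<^esub> b)"
      using zc by (simp add: H.m_assoc[symmetric])
    finally show ?thesis .
  qed
  have gval: "\<And>x. x \<in> carrier Hm \<Longrightarrow> ?g x = lam (TT x)  \<otimes>\<^bsub>Hm\<^esub>  f (hm x)  \<otimes>\<^bsub>Hm\<^esub>  hs (\<pi> (hm x))"
    by (simp add: g_fun_def)
  have gcar: "?g x \<in> carrier Hm" if x: "x \<in> carrier Hm" for x
  proof -
    have "TT x \<in> Z" using T_prop[OF x] by simp
    then show ?thesis using gval[OF x] lamZ Zcar fZ hm_car[OF x] hsc piN x by simp
  qed
  have ghom: "?g \<in> hom Hm Hm"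
  proof (rule homI)
    fix x assume "x \<in> carrier Hm" then show "?g x \<in> carrier Hm" by (rule gcar)
  next
    fix x y assume x: "x \<in> carrier Hm" and y: "y \<in> carrier Hm"
    define a where "a = hm x"
    define b where "b = hm y"
    define t where "t = TT x"
    define u where "u = TT y"
    have ab: "a \<in> N" "b \<in> N" using hm_car x y a_def b_def by auto
    have tu: "t \<in> Z" "x = t  \<otimes>\<^bsub>Hm\<^esub>  hs a" "u \<in> Z" "y = u  \<otimes>\<^bsub>Hm\<^esub>  hs b"
      using T_prop[OF x] T_prop[OF y] t_def u_def a_def b_def by auto
    have t1: "T1 a b \<in> Z" "T1 a b  \<otimes>\<^bsub>Hm\<^esub>  hs (a \<otimes>\<^bsub>L\<^esub> b) = hs a  \<otimes>\<^bsub>Hm\<^esub>  hs b" using t1_prop[OF ab] by auto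
    have t2: "T2 a b \<in> Z" "T2 a b  \<otimes>\<^bsub>Hm\<^esub>  hs (\<pi> (a \<otimes>\<^bsub>L\<^esub> b)) = hs (\<pi> a)  \<otimes>\<^bsub>Hm\<^esub>  hs (\<pi> b)" using t2_prop[OF ab] by auto
    have abN: "a \<otimes>\<^bsub>L\<^esub> b \<in> N" using KN ab by simp
    have xy: "x  \<otimes>\<^bsub>Hm\<^esub>  y = ((t  \<otimes>\<^bsub>Hm\<^esub>  u)  \<otimes>\<^bsub>Hm\<^esub>  T1 a b)  \<otimes>\<^bsub>Hm\<^esub>  hs (a \<otimes>\<^bsub>L\<^esub> b)"
    proof -
      have "x  \<otimes>\<^bsub>Hm\<^esub>  y = (t  \<otimes>\<^bsub>Hm\<^esub>  u)  \<otimes>\<^bsub>Hm\<^esub>  (hs a  \<otimes>\<^bsub>Hm\<^esub>  hs b)" using tu(2,4) Zswap[OF tu(1) tu(3) hsc[OF ab(1)] hsc[OF ab(2)]] by simp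
      also have "\<dots> = (t  \<otimes>\<^bsub>Hm\<^esub>  u)  \<otimes>\<^bsub>Hm\<^esub>  (T1 a b  \<otimes>\<^bsub>Hm\<^esub>  hs (a \<otimes>\<^bsub>L\<^esub> b))" using t1 by simp
      also have "\<dots> = ((t  \<otimes>\<^bsub>Hm\<^esub>  u)  \<otimes>\<^bsub>Hm\<^esub>  T1 a b)  \<otimes>\<^bsub>Hm\<^esub>  hs (a \<otimes>\<^bsub>L\<^esub> b)"
        using tu(1,3) t1(1) Zcar[of t] Zcar[of u] Zcar[of "T1 a b"] hsc[OF abN] by (simp add: H.m_assoc)
      finally show ?thesis .
    qed
    have hxy: "hm (x  \<otimes>\<^bsub>Hm\<^esub>  y) = a \<otimes>\<^bsub>L\<^esub> b" using hm_mult x y a_def b_def by simp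
    have tuZ: "(t  \<otimes>\<^bsub>Hm\<^esub>  u)  \<otimes>\<^bsub>Hm\<^esub>  T1 a b \<in> Z" using Zmult tu t1 by simp
    have Txy: "TT (x  \<otimes>\<^bsub>Hm\<^esub>  y) = (t  \<otimes>\<^bsub>Hm\<^esub>  u)  \<otimes>\<^bsub>Hm\<^esub>  T1 a b"
      using the_Z[OF tuZ _ hsc[OF abN]] xy hxy by simp
    have "?g (x  \<otimes>\<^bsub>Hm\<^esub>  y) = lam ((t  \<otimes>\<^bsub>Hm\<^esub>  u)  \<otimes>\<^bsub>Hm\<^esub>  T1 a b)  \<otimes>\<^bsub>Hm\<^esub>  f (a \<otimes>\<^bsub>L\<^esub> b)  \<otimes>\<^bsub>Hm\<^esub>  hs (\<pi> (a \<otimes>\<^bsub>L\<^esub> b))"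
      using gval[of "x  \<otimes>\<^bsub>Hm\<^esub>  y"] x y Txy hxy by simp
    also have "\<dots> = ((lam t  \<otimes>\<^bsub>Hm\<^esub>  lam u)  \<otimes>\<^bsub>Hm\<^esub>  lam (T1 a b))  \<otimes>\<^bsub>Hm\<^esub>  f (a \<otimes>\<^bsub>L\<^esub> b)  \<otimes>\<^bsub>Hm\<^esub>  hs (\<pi> (a \<otimes>\<^bsub>L\<^esub> b))"
      using lam_mult tu t1 Zmult by simp
    finally have e1: "?g (x  \<otimes>\<^bsub>Hm\<^esub>  y) = ((lam t  \<otimes>\<^bsub>Hm\<^esub>  lam u)  \<otimes>\<^bsub>Hm\<^esub>  lam (T1 a b))  \<otimes>\<^bsub>Hm\<^esub>  f (a \<otimes>\<^bsub>L\<^esub> b)  \<otimes>\<^bsub>Hm\<^esub>  hs (\<pi> (a \<otimes>\<^bsub>L\<^esub> b))" .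
    have lZ: "lam t \<in> Z" "lam u \<in> Z" "lam (T1 a b) \<in> Z" using lamZ tu t1 by auto
    have fz: "f a \<in> Z" "f b \<in> Z" "f (a \<otimes>\<^bsub>L\<^esub> b) \<in> Z" using fZ ab abN by auto
    have pc: "hs (\<pi> a) \<in> carrier Hm" "hs (\<pi> b) \<in> carrier Hm" "hs (\<pi> (a \<otimes>\<^bsub>L\<^esub> b)) \<in> carrier Hm"
      using hsc piN ab abN by auto
    have "?g x  \<otimes>\<^bsub>Hm\<^esub>  ?g y = ((lam t  \<otimes>\<^bsub>Hm\<^esub>  f a)  \<otimes>\<^bsub>Hm\<^esub>  hs (\<pi> a))  \<otimes>\<^bsub>Hm\<^esub>  ((lam u  \<otimes>\<^bsub>Hm\<^esub>  f b)  \<otimes>\<^bsub>Hm\<^esub>  hs (\<pi> b))"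
      using gval x y t_def u_def a_def b_def by simp
    also have "\<dots> = ((lam t  \<otimes>\<^bsub>Hm\<^esub>  f a)  \<otimes>\<^bsub>Hm\<^esub>  (lam u  \<otimes>\<^bsub>Hm\<^esub>  f b))  \<otimes>\<^bsub>Hm\<^esub>  (hs (\<pi> a)  \<otimes>\<^bsub>Hm\<^esub>  hs (\<pi> b))"
      by (rule Zswap) (use Zmult lZ fz pc in auto)
    also have "\<dots> = ((lam t  \<otimes>\<^bsub>Hm\<^esub>  lam u)  \<otimes>\<^bsub>Hm\<^esub>  (f a  \<otimes>\<^bsub>Hm\<^esub>  f b))  \<otimes>\<^bsub>Hm\<^esub>  (T2 a b  \<otimes>\<^bsub>Hm\<^esub>  hs (\<pi> (a \<otimes>\<^bsub>L\<^esub> b)))"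
      using Zswap[OF lZ(1) lZ(2) Zcar[OF fz(1)] Zcar[OF fz(2)]] t2(2) by simp
    also have "\<dots> = ((lam t  \<otimes>\<^bsub>Hm\<^esub>  lam u)  \<otimes>\<^bsub>Hm\<^esub>  ((f a  \<otimes>\<^bsub>Hm\<^esub>  f b)  \<otimes>\<^bsub>Hm\<^esub>  T2 a b))  \<otimes>\<^bsub>Hm\<^esub>  hs (\<pi> (a \<otimes>\<^bsub>L\<^esub> b))"
      using lZ fz Zcar t2 pc by (simp add: H.m_assoc)
    also have "\<dots> = ((lam t  \<otimes>\<^bsub>Hm\<^esub>  lam u)  \<otimes>\<^bsub>Hm\<^esub>  (lam (T1 a b)  \<otimes>\<^bsub>Hm\<^esub>  f (a \<otimes>\<^bsub>L\<^esub> b)))  \<otimes>\<^bsub>Hm\<^esub>  hs (\<pi> (a \<otimes>\<^bsub>L\<^esub> b))"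
      using cond2[OF ab] by simp
    also have "\<dots> = ((lam t  \<otimes>\<^bsub>Hm\<^esub>  lam u)  \<otimes>\<^bsub>Hm\<^esub>  lam (T1 a b))  \<otimes>\<^bsub>Hm\<^esub>  f (a \<otimes>\<^bsub>L\<^esub> b)  \<otimes>\<^bsub>Hm\<^esub>  hs (\<pi> (a \<otimes>\<^bsub>L\<^esub> b))"
      using lZ fz Zcar by (simp add: H.m_assoc)
    finally show "?g (x  \<otimes>\<^bsub>Hm\<^esub>  y) = ?g x  \<otimes>\<^bsub>Hm\<^esub>  ?g y" using e1 by simp
  qed
  have gext: "?g \<in> extensional (carrier Hm)" by (simp add: g_fun_def)
  have gZ: "?g z = lam z" if z: "z \<in> Z" for z
  proof -
    have zc: "z \<in> carrier Hm" using z Zcar by simp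
    have h1: "hm z = \<one>\<^bsub>L\<^esub>" using ker_iff zc z by simp
    define p where "p = hs \<one>\<^bsub>L\<^esub>"
    have pc: "p \<in> carrier Hm" using hsc oneN p_def by simp
    have t1: "T1 \<one>\<^bsub>L\<^esub> \<one>\<^bsub>L\<^esub> \<in> Z" "T1 \<one>\<^bsub>L\<^esub> \<one>\<^bsub>L\<^esub>  \<otimes>\<^bsub>Hm\<^esub>  p = p  \<otimes>\<^bsub>Hm\<^esub>  p"
      using t1_prop[OF oneN oneN] one_one p_def by auto
    have T1e: "T1 \<one>\<^bsub>L\<^esub> \<one>\<^bsub>L\<^esub> = p" using t1 pc Zcar by simp
    have t2: "T2 \<one>\<^bsub>L\<^esub> \<one>\<^bsub>L\<^esub> \<in> Z" "T2 \<one>\<^bsub>L\<^esub> \<one>\<^bsub>L\<^esub>  \<otimes>\<^bsub>Hm\<^esub>  p = p  \<otimes>\<^bsub>Hm\<^esub>  p"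
      using t2_prop[OF oneN oneN] one_one pione p_def by auto
    have T2e: "T2 \<one>\<^bsub>L\<^esub> \<one>\<^bsub>L\<^esub> = p" using t2 pc Zcar by simp
    have pZ: "p \<in> Z" using t1 T1e by simp
    have f1: "f \<one>\<^bsub>L\<^esub> \<in> Z" using fZ oneN by simp
    have "f \<one>\<^bsub>L\<^esub>  \<otimes>\<^bsub>Hm\<^esub>  f \<one>\<^bsub>L\<^esub> = (lam p  \<otimes>\<^bsub>Hm\<^esub>  inv\<^bsub>Hm\<^esub> p)  \<otimes>\<^bsub>Hm\<^esub>  f \<one>\<^bsub>L\<^esub>"
      using cond[OF oneN oneN] T1e T2e one_one by simp
    then have f1e: "f \<one>\<^bsub>L\<^esub> = lam p  \<otimes>\<^bsub>Hm\<^esub>  inv\<^bsub>Hm\<^esub> p"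
      using f1 Zcar lamZ pZ pc by simp
    have tz: "z  \<otimes>\<^bsub>Hm\<^esub>  inv\<^bsub>Hm\<^esub> p \<in> Z" using Zmult Zinv pZ z by simp
    have Tz: "TT z = z  \<otimes>\<^bsub>Hm\<^esub>  inv\<^bsub>Hm\<^esub> p"
      using the_Z[OF tz _ pc] h1 zc pc p_def by (simp add: H.m_assoc)
    have "?g z = lam (z  \<otimes>\<^bsub>Hm\<^esub>  inv\<^bsub>Hm\<^esub> p)  \<otimes>\<^bsub>Hm\<^esub>  (lam p  \<otimes>\<^bsub>Hm\<^esub>  inv\<^bsub>Hm\<^esub> p)  \<otimes>\<^bsub>Hm\<^esub>  p"
      using gval[OF zc] Tz h1 pione f1e p_def by simp
    also have "\<dots> = (lam (z  \<otimes>\<^bsub>Hm\<^esub>  inv\<^bsub>Hm\<^esub> p)  \<otimes>\<^bsub>Hm\<^esub>  lam p)"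
      using lamZ tz pZ Zcar pc by (simp add: H.m_assoc)
    also have "\<dots> = lam z" using lam_mult[OF tz pZ] zc pc by (simp add: H.m_assoc)
    finally show ?thesis .
  qed
  have gcos: "?g x \<in> hs (\<pi> (hm x)) <#\<^bsub>Hm\<^esub> Z" if x: "x \<in> carrier Hm" for x
  proof -
    have w: "lam (TT x)  \<otimes>\<^bsub>Hm\<^esub>  f (hm x) \<in> Z" using T_prop[OF x] lamZ fZ hm_car[OF x] Zmult by simp
    have "?g x = hs (\<pi> (hm x))  \<otimes>\<^bsub>Hm\<^esub>  (lam (TT x)  \<otimes>\<^bsub>Hm\<^esub>  f (hm x))"
      using gval[OF x] Zcomm[OF w] hsc piN hm_car[OF x] by simp
    then show ?thesis using w unfolding l_coset_def by blast
  qed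
  show ?thesis unfolding A_set_def using ghom gext gZ gcos by blast
qed

lemma A_to_F: assumes g: "g \<in> A_set L Hm hm hs Fm ss bs \<pi>"
  shows "g \<in> g_fun Hm hm hs Fm ss bs \<pi> ` F_set L N Hm C hs Fm ss bs \<pi>"
proof -
  interpret H: group Hm by (rule grpH)
  have gh: "g \<in> hom Hm Hm" and gext: "g \<in> extensional (carrier Hm)"
    and gZ: "\<And>z. z \<in> Z \<Longrightarrow> g z = lam z"
    and gcos: "\<And>x. x \<in> carrier Hm \<Longrightarrow> g x \<in> hs (\<pi> (hm x)) <#\<^bsub>Hm\<^esub> Z"
    using g unfolding A_set_def by auto
  have gm: "\<And>x y. x \<in> carrier Hm \<Longrightarrow> y \<in> carrier Hm \<Longrightarrow> g (x  \<otimes>\<^bsub>Hm\<^esub>  y) = g x  \<otimes>\<^bsub>Hm\<^esub>  g y"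
    using gh by (simp add: hom_mult)
  have gc: "\<And>x. x \<in> carrier Hm \<Longrightarrow> g x \<in> carrier Hm" using gh by (auto simp: hom_def)
  define f where "f = (\<lambda>a \<in> N. g (hs a)  \<otimes>\<^bsub>Hm\<^esub>  inv\<^bsub>Hm\<^esub> (hs (\<pi> a)))"
  have fprop: "f a \<in> Z \<and> g (hs a) = f a  \<otimes>\<^bsub>Hm\<^esub>  hs (\<pi> a)" if a: "a \<in> N" for a
  proof -
    have hma: "hm (hs a) = a" using hsN a by simp
    have pc: "hs (\<pi> a) \<in> carrier Hm" using hsc piN a by simp
    obtain z where z: "z \<in> Z" "g (hs a) = hs (\<pi> a)  \<otimes>\<^bsub>Hm\<^esub>  z"
      using gcos[OF hsc[OF a]] hma unfolding l_coset_def by auto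
    have fa: "f a = g (hs a)  \<otimes>\<^bsub>Hm\<^esub>  inv\<^bsub>Hm\<^esub> (hs (\<pi> a))" using a f_def by simp
    have "f a = (z  \<otimes>\<^bsub>Hm\<^esub>  hs (\<pi> a))  \<otimes>\<^bsub>Hm\<^esub>  inv\<^bsub>Hm\<^esub> (hs (\<pi> a))" using fa z Zcomm[OF z(1) pc] by simp
    also have "\<dots> = z" using z Zcar pc by (simp add: H.m_assoc)
    finally have fz: "f a = z" .
    then show ?thesis using z Zcomm[OF z(1) pc] by simp
  qed
  have fF: "f \<in> F_set L N Hm C hs Fm ss bs \<pi>"
    unfolding F_set_def
  proof (intro CollectI conjI ballI)
    show "f \<in> N \<rightarrow>\<^sub>E Z" using fprop f_def by auto
  next
    fix a b assume a: "a \<in> N" and b: "b \<in> N"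
    note ab = a b
    have t1: "T1 a b \<in> Z" "T1 a b  \<otimes>\<^bsub>Hm\<^esub>  hs (a \<otimes>\<^bsub>L\<^esub> b) = hs a  \<otimes>\<^bsub>Hm\<^esub>  hs b" using t1_prop[OF ab] by auto
    have t2: "T2 a b \<in> Z" "T2 a b  \<otimes>\<^bsub>Hm\<^esub>  hs (\<pi> (a \<otimes>\<^bsub>L\<^esub> b)) = hs (\<pi> a)  \<otimes>\<^bsub>Hm\<^esub>  hs (\<pi> b)" using t2_prop[OF ab] by auto
    have abN: "a \<otimes>\<^bsub>L\<^esub> b \<in> N" using KN ab by simp
    have fz: "f a \<in> Z" "f b \<in> Z" "f (a \<otimes>\<^bsub>L\<^esub> b) \<in> Z" using fprop ab abN by auto
    have pc: "hs (\<pi> a) \<in> carrier Hm" "hs (\<pi> b) \<in> carrier Hm" "hs (\<pi> (a \<otimes>\<^bsub>L\<^esub> b)) \<in> carrier Hm"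
      using hsc piN ab abN by auto
    have lZ: "lam (T1 a b) \<in> Z" using lamZ t1 by simp
    have "g (hs a  \<otimes>\<^bsub>Hm\<^esub>  hs b) = g (T1 a b  \<otimes>\<^bsub>Hm\<^esub>  hs (a \<otimes>\<^bsub>L\<^esub> b))" using t1 by simp
    also have "\<dots> = lam (T1 a b)  \<otimes>\<^bsub>Hm\<^esub>  (f (a \<otimes>\<^bsub>L\<^esub> b)  \<otimes>\<^bsub>Hm\<^esub>  hs (\<pi> (a \<otimes>\<^bsub>L\<^esub> b)))"
      using gm Zcar t1(1) hsc abN gZ fprop by simp
    also have "\<dots> = (lam (T1 a b)  \<otimes>\<^bsub>Hm\<^esub>  f (a \<otimes>\<^bsub>L\<^esub> b))  \<otimes>\<^bsub>Hm\<^esub>  hs (\<pi> (a \<otimes>\<^bsub>L\<^esub> b))"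
      using lZ fz Zcar pc by (simp add: H.m_assoc)
    finally have e1: "g (hs a  \<otimes>\<^bsub>Hm\<^esub>  hs b) = (lam (T1 a b)  \<otimes>\<^bsub>Hm\<^esub>  f (a \<otimes>\<^bsub>L\<^esub> b))  \<otimes>\<^bsub>Hm\<^esub>  hs (\<pi> (a \<otimes>\<^bsub>L\<^esub> b))" .
    have "g (hs a  \<otimes>\<^bsub>Hm\<^esub>  hs b) = (f a  \<otimes>\<^bsub>Hm\<^esub>  hs (\<pi> a))  \<otimes>\<^bsub>Hm\<^esub>  (f b  \<otimes>\<^bsub>Hm\<^esub>  hs (\<pi> b))"
      using gm hsc ab fprop by simp
    also have "\<dots> = (f a  \<otimes>\<^bsub>Hm\<^esub>  f b)  \<otimes>\<^bsub>Hm\<^esub>  (hs (\<pi> a)  \<otimes>\<^bsub>Hm\<^esub>  hs (\<pi> b))" by (rule Zswap) (use fz pc in auto)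
    also have "\<dots> = ((f a  \<otimes>\<^bsub>Hm\<^esub>  f b)  \<otimes>\<^bsub>Hm\<^esub>  T2 a b)  \<otimes>\<^bsub>Hm\<^esub>  hs (\<pi> (a \<otimes>\<^bsub>L\<^esub> b))"
      using t2 fz Zcar pc by (simp add: H.m_assoc)
    finally have "((f a  \<otimes>\<^bsub>Hm\<^esub>  f b)  \<otimes>\<^bsub>Hm\<^esub>  T2 a b)  \<otimes>\<^bsub>Hm\<^esub>  hs (\<pi> (a \<otimes>\<^bsub>L\<^esub> b)) = (lam (T1 a b)  \<otimes>\<^bsub>Hm\<^esub>  f (a \<otimes>\<^bsub>L\<^esub> b))  \<otimes>\<^bsub>Hm\<^esub>  hs (\<pi> (a \<otimes>\<^bsub>L\<^esub> b))"
      using e1 by simp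
    then have e2: "(f a  \<otimes>\<^bsub>Hm\<^esub>  f b)  \<otimes>\<^bsub>Hm\<^esub>  T2 a b = lam (T1 a b)  \<otimes>\<^bsub>Hm\<^esub>  f (a \<otimes>\<^bsub>L\<^esub> b)"
      using fz lZ t2 Zcar pc by (simp add: Zmult)
    have "f a  \<otimes>\<^bsub>Hm\<^esub>  f b = ((f a  \<otimes>\<^bsub>Hm\<^esub>  f b)  \<otimes>\<^bsub>Hm\<^esub>  T2 a b)  \<otimes>\<^bsub>Hm\<^esub>  inv\<^bsub>Hm\<^esub> (T2 a b)"
      using fz t2 Zcar by (simp add: H.m_assoc)
    also have "\<dots> = lam (T1 a b)  \<otimes>\<^bsub>Hm\<^esub>  (f (a \<otimes>\<^bsub>L\<^esub> b)  \<otimes>\<^bsub>Hm\<^esub>  inv\<^bsub>Hm\<^esub> (T2 a b))"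
      using e2 lZ fz t2 Zcar by (simp add: H.m_assoc)
    also have "\<dots> = lam (T1 a b)  \<otimes>\<^bsub>Hm\<^esub>  (inv\<^bsub>Hm\<^esub> (T2 a b)  \<otimes>\<^bsub>Hm\<^esub>  f (a \<otimes>\<^bsub>L\<^esub> b))"
      using Zcomm[OF fz(3)] t2 Zcar by simp
    also have "\<dots> = lam (T1 a b)  \<otimes>\<^bsub>Hm\<^esub>  inv\<^bsub>Hm\<^esub> (T2 a b)  \<otimes>\<^bsub>Hm\<^esub>  f (a \<otimes>\<^bsub>L\<^esub> b)"
      using lZ fz t2 Zcar by (simp add: H.m_assoc)
    finally show "f a  \<otimes>\<^bsub>Hm\<^esub>  f b = lam (T1 a b)  \<otimes>\<^bsub>Hm\<^esub>  inv\<^bsub>Hm\<^esub> (T2 a b)  \<otimes>\<^bsub>Hm\<^esub>  f (a \<otimes>\<^bsub>L\<^esub> b)" .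
  qed
  have "g = g_fun Hm hm hs Fm ss bs \<pi> f"
  proof (rule ext)
    fix x
    show "g x = g_fun Hm hm hs Fm ss bs \<pi> f x"
    proof (cases "x \<in> carrier Hm")
      case False
      then show ?thesis using gext by (simp add: g_fun_def extensional_def)
    next
      case x: True
      define a where "a = hm x"
      have aN: "a \<in> N" using hm_car x a_def by simp
      have tZ: "TT x \<in> Z" "x = TT x  \<otimes>\<^bsub>Hm\<^esub>  hs a" using T_prop[OF x] a_def by auto
      have "g x = g (TT x)  \<otimes>\<^bsub>Hm\<^esub>  g (hs a)" using arg_cong[OF tZ(2), of g] gm[OF Zcar[OF tZ(1)] hsc[OF aN]] by simp
      also have "\<dots> = lam (TT x)  \<otimes>\<^bsub>Hm\<^esub>  (f a  \<otimes>\<^bsub>Hm\<^esub>  hs (\<pi> a))" using gZ tZ fprop aN by simp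
      also have "\<dots> = lam (TT x)  \<otimes>\<^bsub>Hm\<^esub>  f a  \<otimes>\<^bsub>Hm\<^esub>  hs (\<pi> a)"
        using lamZ tZ fprop aN Zcar hsc piN by (simp add: H.m_assoc)
      finally show ?thesis using x a_def by (simp add: g_fun_def)
    qed
  qed
  then show ?thesis using fF by blast
qed

theorem main: "A_set L Hm hm hs Fm ss bs \<pi> = g_fun Hm hm hs Fm ss bs \<pi> ` F_set L N Hm C hs Fm ss bs \<pi>"
  using A_to_F F_to_A by blast

end

theorem proposition3p5:
  fixes L :: "('l, 'a) monoid_scheme" and N :: "'l set"
    and Hm :: "('h, 'b) monoid_scheme" and C :: "'h set"
    and hc hm :: "'h \<Rightarrow> 'l" and hs :: "'l \<Rightarrow> 'h"
    and Fc Fm :: "'l \<Rightarrow> 'h \<Rightarrow> 'h"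
    and n :: nat and ss :: "int list" and bs :: "'l list" and \<pi> :: "'l \<Rightarrow> 'l"
  assumes c: "C2_aut L N (Hm\<lparr>carrier := C\<rparr>) hc hs Fc"
    and m: "M_member_2 L N Hm C hc hm hs Fc Fm"
    and n: "n > 0" and ss: "length ss = n" and bs: "length bs = n" "set bs \<subseteq> carrier L"
    and \<pi>: "\<pi> \<in> hom (L\<lparr>carrier := N\<rparr>) (L\<lparr>carrier := N\<rparr>)"
  shows "A_set L Hm hm hs Fm ss bs \<pi> =
           g_fun Hm hm hs Fm ss bs \<pi> ` F_set L N Hm C hs Fm ss bs \<pi>"
proof -
  have m2: "C2_aut L N Hm hm hs Fm" and subC: "subgroup C Hm"
    and hmc: "\<forall>x \<in> C. hm x = hc x"
    and ZC: "grp_center (Hm\<lparr>carrier := C\<rparr>) = grp_center Hm \<inter> C"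
    using m unfolding M_member_2_def by auto
  have gL: "group L" and gH: "group Hm" and nN: "N \<lhd> L"
    and Fi: "\<forall>l \<in> carrier L. Fm l \<in> iso Hm Hm"
    and ep: "hm \<in> epi Hm (L\<lparr>carrier := N\<rparr>)"
    and ker: "kernel Hm (L\<lparr>carrier := N\<rparr>) hm = grp_center Hm"
    using m2 unfolding C2_aut_def by auto
  have hsc: "\<forall>n \<in> N. hs n \<in> C \<and> hc (hs n) = n" using c unfolding C2_aut_def by auto
  have gK: "group (L\<lparr>carrier := N\<rparr>)"
    using subgroup.subgroup_is_group[OF normal_imp_subgroup[OF nN] gL] .
  have hmhom: "hm \<in> hom Hm (L\<lparr>carrier := N\<rparr>)" using ep by (simp add: epi_def)
  have "P35 L N Hm C hm hs Fm bs \<pi>"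
    by (rule P35.intro) (use gH gK subC hmhom ker hsc hmc ZC Fi bs(2) \<pi> in auto)
  then show ?thesis by (rule P35.main)
qed

end
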